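(* Let $\kappa$ be an uncountable cardinal, let $X$ be a set of cardinality at least $\kappa$, let $\Gamma$ be the group of all permutations of $X$ acting by application, and let $I_\kappa$ be the ideal of subsets of $X$ of cardinality less than $\kappa$. Then $\Gamma\curvearrowright X, I_\kappa$ has cofinal orbits if and only if $\kappa$ is a successor cardinal.
   Context: For a group $\Gamma$ acting on $X$ and a $\Gamma$-invariant ideal $I$ on $X$ containing all singletons, and $a\subseteq X$, $\mathrm{pstab}(a)=\{\gamma\in\Gamma:\gamma\cdot x=x\ \forall x\in a\}$. For $a,b\in I$, $b$ is $a$-large if for every $c\in I$ there is $\gamma\in\mathrm{pstab}(a)$ with $c\subseteq\gamma\cdot b$, where $\gamma\cdot b=\{\gamma\cdot x:x\in b\}$. The dynamical ideal has cofinal orbits if for every $a\in I$ there is an $a$-large $b\in I$. *)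

theory Defs
  imports Main "HOL-Combinatorics.Permutations"
begin

definition pstab :: "('a \<Rightarrow> 'a) set \<Rightarrow> 'a set \<Rightarrow> ('a \<Rightarrow> 'a) set" where
  "pstab G a = {g \<in> G. \<forall>x\<in>a. g x = x}"

definition is_large :: "('a \<Rightarrow> 'a) set \<Rightarrow> 'a set set \<Rightarrow> 'a set \<Rightarrow> 'a set \<Rightarrow> bool" where
  "is_large G I a b \<longleftrightarrow> (\<forall>c\<in>I. \<exists>g\<in>pstab G a. c \<subseteq> g ` b)"

definition cofinal_orbits :: "('a \<Rightarrow> 'a) set \<Rightarrow> 'a set set \<Rightarrow> bool" where
  "cofinal_orbits G I \<longleftrightarrow> (\<forall>a\<in>I. \<exists>b\<in>I. is_large G I a b)"

definition successor_cardinal :: "'k rel \<Rightarrow> bool" where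
  "successor_cardinal r \<longleftrightarrow> (\<exists>\<mu> :: 'k rel. Card_order \<mu> \<and> (r, cardSuc \<mu>) \<in> ordIso)"

end

theory Submission
  imports Defs
begin

lemma diff_same_card:
  assumes "infinite Y" "(card_of e, card_of Y) \<in> ordLess"
  shows "(card_of (Y - e), card_of Y) \<in> ordIso"
proof -
  have "(card_of (Y - e), card_of Y) \<in> ordLeq" by (rule card_of_mono1) auto
  moreover have "(card_of Y, card_of (Y - e)) \<in> ordLeq"
  proof (rule ccontr)
    assume "(card_of Y, card_of (Y - e)) \<notin> ordLeq"
    hence "(card_of (Y - e), card_of Y) \<in> ordLess"
      using ordLess_or_ordLeq[OF card_of_Well_order card_of_Well_order] by blast
    hence "(card_of ((Y - e) \<union> e), card_of Y) \<in> ordLess"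
      using card_of_Un_ordLess_infinite[OF assms(1)] assms(2) by blast
    moreover have "(card_of Y, card_of ((Y - e) \<union> e)) \<in> ordLeq" by (rule card_of_mono1) auto
    ultimately show False using not_ordLess_ordLeq by blast
  qed
  ultimately show ?thesis using ordIso_iff_ordLeq by blast
qed

lemma perm_exists:
  assumes "d \<subseteq> Y" "e \<subseteq> Y" "(card_of d, card_of e) \<in> ordIso"
    "(card_of (Y - d), card_of (Y - e)) \<in> ordIso"
  shows "\<exists>g. g permutes Y \<and> g ` d = e"
proof -
  obtain f1 where f1: "bij_betw f1 d e" using assms(3) card_of_ordIso by blast
  obtain f2 where f2: "bij_betw f2 (Y - d) (Y - e)" using assms(4) card_of_ordIso by blast
  define g where "g x = (if x \<in> d then f1 x else if x \<in> Y then f2 x else x)" for x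
  have b1: "bij_betw g d e" using f1 by (rule bij_betw_cong[THEN iffD1, rotated]) (simp add: g_def)
  have b2: "bij_betw g (Y - d) (Y - e)" using f2
    by (rule bij_betw_cong[THEN iffD1, rotated]) (simp add: g_def)
  have "bij_betw g (d \<union> (Y - d)) (e \<union> (Y - e))"
    by (rule bij_betw_combine[OF b1 b2]) auto
  moreover have "d \<union> (Y - d) = Y" "e \<union> (Y - e) = Y" using assms by auto
  ultimately have "bij_betw g Y Y" by simp
  moreover have "\<And>x. x \<notin> Y \<Longrightarrow> g x = x" using assms by (auto simp: g_def)
  ultimately have "g permutes Y" by (rule bij_imp_permutes)
  moreover have "g ` d = e" using b1 by (simp add: bij_betw_def)
  ultimately show ?thesis by blast
qed

lemma internal_subset:
  assumes "Card_order r'" "(r', card_of X) \<in> ordLeq"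
  shows "\<exists>c\<subseteq>X. (card_of c, r') \<in> ordIso"
proof -
  have "(card_of (Field r'), card_of X) \<in> ordLeq"
    using ordIso_ordLeq_trans[OF card_of_Field_ordIso[OF assms(1)] assms(2)] .
  then obtain B where "B \<subseteq> X" "(card_of (Field r'), card_of B) \<in> ordIso"
    using internalize_card_of_ordLeq2 by blast
  moreover have "(card_of B, r') \<in> ordIso"
    using ordIso_transitive[OF ordIso_symmetric[OF calculation(2)] card_of_Field_ordIso[OF assms(1)]] .
  ultimately show ?thesis by blast
qed

theorem mainTheorem6:
  fixes r :: "'k rel" and X :: "'a set"
  assumes "Card_order r"
    and "(natLeq, r) \<in> ordLess"
    and "(r, card_of X) \<in> ordLeq"
  shows "cofinal_orbits {f. f permutes X} {a. a \<subseteq> X \<and> (card_of a, r) \<in> ordLess}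
         \<longleftrightarrow> successor_cardinal r"
proof -
  have rinf: "infinite (Field r)"
  proof
    assume "finite (Field r)"
    hence "(r, natLeq) \<in> ordLess"
      using finite_ordLess_infinite[of r natLeq] assms(1) natLeq_Well_order
      by (simp add: Field_natLeq card_order_on_well_order_on)
    thus False using not_ordLess_ordLeq[OF assms(2)] ordLess_imp_ordLeq by blast
  qed
  have Wr: "Well_order r" using assms(1) card_order_on_well_order_on by blast
  show ?thesis
  proof
    assume co: "cofinal_orbits {f. f permutes X} {a. a \<subseteq> X \<and> (card_of a, r) \<in> ordLess}"
    show "successor_cardinal r"
    proof (rule ccontr)
      assume ns: "\<not> successor_cardinal r"
      have "(card_of {}, r) \<in> ordLess"
        by (rule finite_ordLess_infinite[OF card_of_Well_order Wr]) (simp_all add: Field_card_of rinf)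
      then obtain b where b: "b \<subseteq> X" "(card_of b, r) \<in> ordLess"
        and lg: "is_large {f. f permutes X} {a. a \<subseteq> X \<and> (card_of a, r) \<in> ordLess} {} b"
        using co unfolding cofinal_orbits_def by blast
      obtain B where B: "B \<subseteq> Field r" "(card_of b, card_of B) \<in> ordIso"
        using internalize_card_of_ordLeq[THEN iffD1, OF ordLess_imp_ordLeq[OF b(2)]] by blast
      have Bl: "(card_of B, r) \<in> ordLess"
        using ordIso_ordLess_trans[OF ordIso_symmetric[OF B(2)] b(2)] .
      have "(cardSuc (card_of B), r) \<in> ordLeq"
        using cardSuc_least[OF card_of_Card_order assms(1) Bl] .
      moreover have "(cardSuc (card_of B), r) \<notin> ordIso"
        using ns card_of_Card_order[of B] ordIso_symmetric[of "cardSuc (card_of B)" r] unfolding successor_cardinal_def by blast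
      ultimately have sl: "(cardSuc (card_of B), r) \<in> ordLess"
        using ordLeq_iff_ordLess_or_ordIso by blast
      have "(cardSuc (card_of B), card_of X) \<in> ordLeq"
        using ordLeq_transitive[OF ordLess_imp_ordLeq[OF sl] assms(3)] .
      then obtain c where c: "c \<subseteq> X" "(card_of c, cardSuc (card_of B)) \<in> ordIso"
        using internal_subset[OF cardSuc_Card_order[OF card_of_Card_order]] by blast
      have "(card_of c, r) \<in> ordLess" using ordIso_ordLess_trans[OF c(2) sl] .
      hence cI: "c \<in> {a. a \<subseteq> X \<and> (card_of a, r) \<in> ordLess}" using c(1) by simp
      have "\<exists>g\<in>pstab {f. f permutes X} {}. c \<subseteq> g ` b" using bspec[OF lg[unfolded is_large_def] cI] .
      then obtain g where "c \<subseteq> g ` b" by (rule bexE)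
      hence "(card_of c, card_of b) \<in> ordLeq"
        by (rule ordLeq_transitive[OF card_of_mono1 card_of_image])
      hence "(card_of c, card_of B) \<in> ordLeq" by (rule ordLeq_ordIso_trans[OF _ B(2)])
      hence "(card_of c, cardSuc (card_of B)) \<in> ordLess"
        by (rule ordLeq_ordLess_trans[OF _ cardSuc_greater[OF card_of_Card_order]])
      hence "(card_of c, card_of c) \<in> ordLess" by (rule ordLess_ordIso_trans[OF _ ordIso_symmetric[OF c(2)]])
      thus False by (rule notE[OF ordLess_irreflexive])
    qed
  next
    assume "successor_cardinal r"
    then obtain \<mu> :: "'k rel" where mu: "Card_order \<mu>" "(r, cardSuc \<mu>) \<in> ordIso"
      unfolding successor_cardinal_def by blast
    have Ieq: "(card_of A, r) \<in> ordLess \<longleftrightarrow> (card_of A, \<mu>) \<in> ordLeq" for A :: "'a set"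
    proof -
      have "(card_of A, r) \<in> ordLess \<longleftrightarrow> (card_of A, cardSuc \<mu>) \<in> ordLess"
        by (intro iffI) (erule ordLess_ordIso_trans[OF _ mu(2)], erule ordLess_ordIso_trans[OF _ ordIso_symmetric[OF mu(2)]])
      also have "\<dots> \<longleftrightarrow> (card_of A, \<mu>) \<in> ordLeq"
        using cardSuc_ordLeq_ordLess[OF mu(1) card_of_Card_order] .
      finally show ?thesis .
    qed
    have muinf: "infinite (Field \<mu>)"
    proof
      assume "finite (Field \<mu>)"
      hence "finite (Field (cardSuc \<mu>))" using cardSuc_finite[OF mu(1)] by simp
      hence "(cardSuc \<mu>, natLeq) \<in> ordLess"
        by (rule finite_ordLess_infinite[OF card_order_on_well_order_on[OF cardSuc_Card_order[OF mu(1)]] natLeq_Well_order])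
          (simp add: Field_natLeq)
      hence "(r, natLeq) \<in> ordLess" by (rule ordIso_ordLess_trans[OF mu(2)])
      thus False by (rule notE[OF not_ordLess_ordLeq[OF assms(2)] ordLess_imp_ordLeq])
    qed
    have mur: "(\<mu>, r) \<in> ordLess"
      using ordLess_ordIso_trans[OF cardSuc_greater[OF mu(1)] ordIso_symmetric[OF mu(2)]] .
    show "cofinal_orbits {f. f permutes X} {a. a \<subseteq> X \<and> (card_of a, r) \<in> ordLess}"
      unfolding cofinal_orbits_def
    proof
      fix a assume "a \<in> {a. a \<subseteq> X \<and> (card_of a, r) \<in> ordLess}"
      hence a: "a \<subseteq> X" "(card_of a, \<mu>) \<in> ordLeq" using Ieq by auto
      define Y where "Y = X - a"
      have muY: "(\<mu>, card_of Y) \<in> ordLess"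
      proof (rule ccontr)
        assume "(\<mu>, card_of Y) \<notin> ordLess"
        hence "(card_of Y, \<mu>) \<in> ordLeq"
          using ordLess_or_ordLeq[OF card_order_on_well_order_on[OF mu(1)] card_of_Well_order] by blast
        hence "(card_of (a \<union> Y), \<mu>) \<in> ordLeq"
          by (rule card_of_Un_ordLeq_infinite_Field[OF muinf a(2) _ mu(1)])
        moreover have "a \<union> Y = X" using a(1) Y_def by auto
        ultimately have "(card_of X, \<mu>) \<in> ordLeq" by simp
        hence "(card_of X, r) \<in> ordLess" by (rule ordLeq_ordLess_trans[OF _ mur])
        thus False using assms(3) by (rule notE[OF not_ordLess_ordLeq])
      qed
      have Yinf: "infinite Y"
      proof
        assume "finite Y"
        have "(card_of Y, \<mu>) \<in> ordLess"
          by (rule finite_ordLess_infinite[OF card_of_Well_order card_order_on_well_order_on[OF mu(1)]])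
             (simp_all add: Field_card_of muinf \<open>finite Y\<close>)
        thus False by (rule notE[OF not_ordLess_ordLeq[OF muY] ordLess_imp_ordLeq])
      qed
      obtain d where d: "d \<subseteq> Y" "(card_of d, \<mu>) \<in> ordIso"
        using internal_subset[OF mu(1) ordLess_imp_ordLeq[OF muY]] by blast
      define b where "b = a \<union> d"
      have dmu: "(card_of d, \<mu>) \<in> ordLeq" using ordIso_iff_ordLeq[THEN iffD1, OF d(2)] by (rule conjunct1)
      have "(card_of b, \<mu>) \<in> ordLeq"
        unfolding b_def using card_of_Un_ordLeq_infinite_Field[OF muinf a(2) dmu mu(1)] .
      hence bI: "b \<in> {a. a \<subseteq> X \<and> (card_of a, r) \<in> ordLess}"
        using Ieq a(1) d(1) Y_def b_def by auto
      have "is_large {f. f permutes X} {a. a \<subseteq> X \<and> (card_of a, r) \<in> ordLess} a b"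
        unfolding is_large_def
      proof
        fix c assume "c \<in> {a. a \<subseteq> X \<and> (card_of a, r) \<in> ordLess}"
        hence c: "c \<subseteq> X" "(card_of c, \<mu>) \<in> ordLeq" using Ieq by auto
        define e where "e = (c - a) \<union> d"
        have "(card_of (c - a), \<mu>) \<in> ordLeq"
          by (rule ordLeq_transitive[OF card_of_mono1[of "c - a" c] c(2)]) auto
        hence emu: "(card_of e, \<mu>) \<in> ordLeq"
          unfolding e_def by (rule card_of_Un_ordLeq_infinite_Field[OF muinf _ dmu mu(1)])
        have eY: "e \<subseteq> Y" using c(1) d(1) Y_def e_def by auto
        have de: "(card_of d, card_of e) \<in> ordIso"
        proof -
          have "(card_of d, card_of e) \<in> ordLeq" by (rule card_of_mono1) (auto simp: e_def)
          moreover have "(card_of e, card_of d) \<in> ordLeq"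
            using ordLeq_ordIso_trans[OF emu ordIso_symmetric[OF d(2)]] .
          ultimately show ?thesis by (rule ordIso_iff_ordLeq[THEN iffD2, OF conjI])
        qed
        have "(card_of (Y - d), card_of Y) \<in> ordIso"
          using diff_same_card[OF Yinf ordLeq_ordLess_trans[OF dmu muY]] .
        moreover have "(card_of (Y - e), card_of Y) \<in> ordIso"
          using diff_same_card[OF Yinf ordLeq_ordLess_trans[OF emu muY]] .
        ultimately have "(card_of (Y - d), card_of (Y - e)) \<in> ordIso"
          by (rule ordIso_transitive[OF _ ordIso_symmetric])
        then obtain g where g: "g permutes Y" "g ` d = e"
          using perm_exists[OF d(1) eY de] by blast
        have gX: "g permutes X" using g(1) permutes_subset Y_def by blast
        have ga: "\<forall>x\<in>a. g x = x" using g(1) permutes_not_in Y_def by fastforce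
        have "c \<subseteq> g ` b"
        proof
          fix x assume x: "x \<in> c"
          show "x \<in> g ` b"
          proof (cases "x \<in> a")
            case True thus ?thesis using ga b_def by force
          next
            case False
            hence "x \<in> e" using x e_def by auto
            thus ?thesis using g(2) b_def by blast
          qed
        qed
        moreover have "g \<in> pstab {f. f permutes X} a" using gX ga by (simp add: pstab_def)
        ultimately show "\<exists>g\<in>pstab {f. f permutes X} a. c \<subseteq> g ` b" by blast
      qed
      thus "\<exists>b\<in>{a. a \<subseteq> X \<and> (card_of a, r) \<in> ordLess}. is_large {f. f permutes X} {a. a \<subseteq> X \<and> (card_of a, r) \<in> ordLess} a b"
        using bI by blast
    qed
  qed
qed

end
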